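(* Let $1\le b<\frac{n}{2}-1$ and let $T$ be a tree attaining the maximum value of $M_2$ over $\mathcal{CT}^*_{n,b}$. Then $T$ contains no internal path of length greater than $1$.
   Context: A chemical tree is a tree with maximum degree at most $4$. A branching vertex is a vertex of degree greater than $2$. An internal path is a path $u_0\cdots u_r$ ($r\ge1$) whose end vertices are branching and whose internal vertices all have degree $2$; its length is $r$. $\mathcal{CT}^*_{n,b}$ is the class of all $n$-vertex chemical trees with exactly $b$ branching vertices. $M_2(G)=\sum_{uv\in E(G)}d_ud_v$, where $d_v$ is the degree of $v$. *)

theory Defs
  imports Complex_Main
begin

definition simple_graph :: "'a set \<Rightarrow> 'a set set \<Rightarrow> bool" where
  "simple_graph V E \<longleftrightarrow> finite V \<and> (\<forall>e\<in>E. \<exists>u v. u \<in> V \<and> v \<in> V \<and> u \<noteq> v \<and> e = {u, v})"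

definition deg :: "'a set set \<Rightarrow> 'a \<Rightarrow> nat" where
  "deg E v = card {e \<in> E. v \<in> e}"

definition adj_rel :: "'a set set \<Rightarrow> ('a \<times> 'a) set" where
  "adj_rel E = {(u, v). {u, v} \<in> E}"

definition connected_graph :: "'a set \<Rightarrow> 'a set set \<Rightarrow> bool" where
  "connected_graph V E \<longleftrightarrow> (\<forall>u\<in>V. \<forall>v\<in>V. (u, v) \<in> (adj_rel E)\<^sup>*)"

definition is_path :: "'a set set \<Rightarrow> 'a list \<Rightarrow> bool" where
  "is_path E ps \<longleftrightarrow> ps \<noteq> [] \<and> distinct ps \<and> (\<forall>i. i + 1 < length ps \<longrightarrow> {ps ! i, ps ! (i + 1)} \<in> E)"

definition is_cycle :: "'a set set \<Rightarrow> 'a list \<Rightarrow> bool" where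
  "is_cycle E ps \<longleftrightarrow> length ps \<ge> 3 \<and> is_path E ps \<and> {last ps, hd ps} \<in> E"

definition tree :: "'a set \<Rightarrow> 'a set set \<Rightarrow> bool" where
  "tree V E \<longleftrightarrow> simple_graph V E \<and> V \<noteq> {} \<and> connected_graph V E \<and> \<not> (\<exists>ps. is_cycle E ps)"

definition chemical_tree :: "'a set \<Rightarrow> 'a set set \<Rightarrow> bool" where
  "chemical_tree V E \<longleftrightarrow> tree V E \<and> (\<forall>v\<in>V. deg E v \<le> 4)"

definition branching_vertices :: "'a set \<Rightarrow> 'a set set \<Rightarrow> 'a set" where
  "branching_vertices V E = {v \<in> V. deg E v > 2}"

definition CT_star :: "nat \<Rightarrow> nat \<Rightarrow> 'a set \<Rightarrow> 'a set set \<Rightarrow> bool" where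
  "CT_star n b V E \<longleftrightarrow> chemical_tree V E \<and> card V = n \<and> card (branching_vertices V E) = b"

definition M2 :: "'a set set \<Rightarrow> nat" where
  "M2 E = (\<Sum>e\<in>E. \<Prod>v\<in>e. deg E v)"

text \<open>Internal path u_0 ... u_r (r >= 1): ends branching, interior vertices of degree 2.
  Its length is r = length ps - 1.\<close>
definition internal_path :: "'a set set \<Rightarrow> 'a list \<Rightarrow> bool" where
  "internal_path E ps \<longleftrightarrow> length ps \<ge> 2 \<and> is_path E ps \<and>
     deg E (hd ps) > 2 \<and> deg E (last ps) > 2 \<and>
     (\<forall>i. 0 < i \<and> i < length ps - 1 \<longrightarrow> deg E (ps ! i) = 2)"

end

theory Submission
  imports Defs
begin


lemma adj_rel_iff[simp]: "(u,v) \<in> adj_rel E \<longleftrightarrow> {u,v} \<in> E"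
  by (simp add: adj_rel_def)

lemma rt_sym: "(u,v) \<in> (adj_rel E)\<^sup>* \<Longrightarrow> (v,u) \<in> (adj_rel E)\<^sup>*"
proof -
  have "sym (adj_rel E)" by (auto simp: sym_def adj_rel_def insert_commute)
  then have "sym ((adj_rel E)\<^sup>*)" by (rule sym_rtrancl)
  then show "(u,v) \<in> (adj_rel E)\<^sup>* \<Longrightarrow> (v,u) \<in> (adj_rel E)\<^sup>*" by (auto dest: symD)
qed

lemma rt_mono: "E \<subseteq> F \<Longrightarrow> (u,v) \<in> (adj_rel E)\<^sup>* \<Longrightarrow> (u,v) \<in> (adj_rel F)\<^sup>*"
proof -
  assume "E \<subseteq> F" "(u,v) \<in> (adj_rel E)\<^sup>*"
  moreover have "adj_rel E \<subseteq> adj_rel F" using \<open>E \<subseteq> F\<close> by (auto simp: adj_rel_def)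
  ultimately show ?thesis using rtrancl_mono by blast
qed

lemma rt_edge: "{u,v} \<in> E \<Longrightarrow> (u,v) \<in> (adj_rel E)\<^sup>*"
  by (simp add: r_into_rtrancl)

lemma walk_seg:
  assumes "\<forall>m. i \<le> m \<and> m < j \<longrightarrow> {ps!m, ps!(m+1)} \<in> H" and "i \<le> j"
  shows "(ps!i, ps!j) \<in> (adj_rel H)\<^sup>*"
  using assms
proof (induction j)
  case 0 then show ?case by simp
next
  case (Suc j)
  show ?case
  proof (cases "i = Suc j")
    case True then show ?thesis by simp
  next
    case False
    then have "i \<le> j" using Suc by simp
    then have "(ps!i, ps!j) \<in> (adj_rel H)\<^sup>*" using Suc by auto
    moreover have "{ps!j, ps!(Suc j)} \<in> H" using Suc.prems \<open>i\<le>j\<close> by auto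
    ultimately show ?thesis by (simp add: rtrancl_into_rtrancl)
  qed
qed

lemma is_path_mono: "is_path F p \<Longrightarrow> F \<subseteq> G \<Longrightarrow> is_path G p"
  by (auto simp: is_path_def)

lemma path_edges_distinct:
  assumes "distinct ps" "m + 1 < length ps" "j + 1 < length ps" "m \<noteq> j"
  shows "{ps!m, ps!(m+1)} \<noteq> {ps!j, ps!(j+1)}"
proof
  assume "{ps!m, ps!(m+1)} = {ps!j, ps!(j+1)}"
  then have "(ps!m = ps!j \<and> ps!(m+1) = ps!(j+1)) \<or> (ps!m = ps!(j+1) \<and> ps!(m+1) = ps!j)"
    by (auto simp: doubleton_eq_iff)
  then show False using assms by (auto simp: nth_eq_iff_index_eq)
qed

lemma path_edge_ne_close:
  assumes "distinct ps" "m + 1 < length ps" "length ps \<ge> 3"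
  shows "{ps!m, ps!(m+1)} \<noteq> {ps!(length ps - 1), ps!0}"
proof
  assume "{ps!m, ps!(m+1)} = {ps!(length ps - 1), ps!0}"
  then have "(ps!m = ps!(length ps - 1) \<and> ps!(m+1) = ps!0) \<or> (ps!m = ps!0 \<and> ps!(m+1) = ps!(length ps - 1))"
    by (auto simp: doubleton_eq_iff)
  moreover have eqs: "\<And>i j. i < length ps \<Longrightarrow> j < length ps \<Longrightarrow> ps!i = ps!j \<longleftrightarrow> i = j"
    using assms(1) nth_eq_iff_index_eq by blast
  moreover have "m < length ps" "m + 1 < length ps" "0 < length ps" "length ps - 1 < length ps" using assms(2) by auto
  ultimately show False
  proof (elim disjE conjE)
    assume "ps!m = ps!(length ps - 1)"
    then have "m = length ps - 1" using eqs \<open>m < length ps\<close> \<open>length ps - 1 < length ps\<close> by blast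
    then show False using assms(2) by simp
  next
    assume "ps!m = ps!0" "ps!(m+1) = ps!(length ps - 1)"
    then have "m = 0" "m + 1 = length ps - 1"
      using eqs \<open>m < length ps\<close> \<open>m+1 < length ps\<close> \<open>0 < length ps\<close> \<open>length ps - 1 < length ps\<close> by blast+
    then show False using assms(3) by simp
  qed
qed

lemma cycle_edge_conn:
  assumes "is_cycle G ps" "j + 1 < length ps"
  shows "(ps!j, ps!(j+1)) \<in> (adj_rel (G - {{ps!j, ps!(j+1)}}))\<^sup>*"
proof -
  let ?H = "G - {{ps!j, ps!(j+1)}}"
  let ?k = "length ps"
  have k3: "?k \<ge> 3" and p: "is_path G ps" and cl: "{last ps, hd ps} \<in> G"
    using assms by (auto simp: is_cycle_def)
  have d: "distinct ps" and ed: "\<forall>i. i + 1 < ?k \<longrightarrow> {ps!i, ps!(i+1)} \<in> G"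
    using p by (auto simp: is_path_def)
  have ne: "ps \<noteq> []" using k3 by auto
  have lst: "last ps = ps!(?k - 1)" and hd: "hd ps = ps!0"
    using ne by (auto simp: last_conv_nth hd_conv_nth)
  have seg: "\<forall>m. a \<le> m \<and> m < b \<longrightarrow> {ps!m, ps!(m+1)} \<in> ?H" if "b < ?k" "j < a \<or> b \<le> j" for a b
    using that ed path_edges_distinct[OF d, of _ j] assms(2) by auto
  have c1: "(ps!0, ps!j) \<in> (adj_rel ?H)\<^sup>*"
    by (rule walk_seg) (use seg[of j 0] assms(2) in auto)
  have c2: "(ps!(j+1), ps!(?k - 1)) \<in> (adj_rel ?H)\<^sup>*"
    by (rule walk_seg) (use seg[of "?k - 1" "j+1"] assms(2) in auto)
  have "{ps!(?k - 1), ps!0} \<in> ?H"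
    using cl lst hd path_edge_ne_close[OF d assms(2) k3] by auto
  then have c3: "(ps!(?k - 1), ps!0) \<in> (adj_rel ?H)\<^sup>*" by (rule rt_edge)
  from c2 c3 c1 show ?thesis
    by (meson rt_sym rtrancl_trans)
qed

lemma cycle_close_conn:
  assumes "is_cycle G ps"
  shows "(ps!(length ps - 1), ps!0) \<in> (adj_rel (G - {{ps!(length ps - 1), ps!0}}))\<^sup>*"
proof -
  let ?k = "length ps"
  let ?H = "G - {{ps!(?k - 1), ps!0}}"
  have k3: "?k \<ge> 3" and p: "is_path G ps"
    using assms by (auto simp: is_cycle_def)
  have d: "distinct ps" and ed: "\<forall>i. i + 1 < ?k \<longrightarrow> {ps!i, ps!(i+1)} \<in> G"
    using p by (auto simp: is_path_def)
  have "(ps!0, ps!(?k - 1)) \<in> (adj_rel ?H)\<^sup>*"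
    by (rule walk_seg) (use ed path_edge_ne_close[OF d _ k3] in auto)
  then show ?thesis by (rule rt_sym)
qed

lemma acyclic_insert:
  assumes "\<not>(\<exists>ps. is_cycle F ps)" "(x,y) \<notin> (adj_rel F)\<^sup>*"
  shows "\<not>(\<exists>ps. is_cycle (insert {x,y} F) ps)"
proof
  assume "\<exists>ps. is_cycle (insert {x,y} F) ps"
  then obtain ps where c: "is_cycle (insert {x,y} F) ps" by blast
  let ?k = "length ps"
  have k3: "?k \<ge> 3" and p: "is_path (insert {x,y} F) ps" and cl: "{last ps, hd ps} \<in> insert {x,y} F"
    using c by (auto simp: is_cycle_def)
  have ne: "ps \<noteq> []" using k3 by auto
  have lst: "last ps = ps!(?k - 1)" and hd: "hd ps = ps!0"
    using ne by (auto simp: last_conv_nth hd_conv_nth)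
  have sub: "insert {x,y} F - {{x,y}} \<subseteq> F" by auto
  have nxy: "(a,b) \<notin> (adj_rel (insert {x,y} F - {{x,y}}))\<^sup>*" if "{a,b} = {x,y}" for a b
  proof
    assume "(a,b) \<in> (adj_rel (insert {x,y} F - {{x,y}}))\<^sup>*"
    then have "(a,b) \<in> (adj_rel F)\<^sup>*" using rt_mono[OF sub] by blast
    then have "(x,y) \<in> (adj_rel F)\<^sup>*" using that rt_sym by (auto simp: doubleton_eq_iff)
    then show False using assms(2) by blast
  qed
  show False
  proof (cases "\<exists>j. j + 1 < ?k \<and> {ps!j, ps!(j+1)} = {x,y}")
    case True
    then obtain j where j: "j + 1 < ?k" "{ps!j, ps!(j+1)} = {x,y}" by blast
    show False using cycle_edge_conn[OF c j(1)] nxy[OF j(2)] j(2) by simp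
  next
    case False
    show False
    proof (cases "{ps!(?k - 1), ps!0} = {x,y}")
      case True
      show False using cycle_close_conn[OF c] nxy[OF True] True by simp
    next
      case F2: False
      have "is_cycle F ps" using c False F2 lst hd unfolding is_cycle_def is_path_def by auto
      then show False using assms(1) by blast
    qed
  qed
qed



lemma path_of_rtrancl:
  assumes "(x,y) \<in> (adj_rel F)\<^sup>*"
  shows "\<exists>p. is_path F p \<and> hd p = x \<and> last p = y"
  using assms
proof (induction rule: converse_rtrancl_induct)
  case base show ?case by (rule exI[of _ "[y]"]) (simp add: is_path_def)
next
  case (step x z)
  then obtain p where p: "is_path F p" "hd p = z" "last p = y" by blast
  have xz: "{x,z} \<in> F" using step by simp
  have ne: "p \<noteq> []" and d: "distinct p" and ed: "\<forall>i. i + 1 < length p \<longrightarrow> {p!i, p!(i+1)} \<in> F"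
    using p by (auto simp: is_path_def)
  show ?case
  proof (cases "x \<in> set p")
    case True
    then obtain i where i: "i < length p" "p!i = x" by (metis in_set_conv_nth)
    have "is_path F (drop i p)"
      unfolding is_path_def using i d ed
      by (auto simp: add.commute add.left_commute)
    moreover have "hd (drop i p) = x" using i by (simp add: hd_drop_conv_nth)
    moreover have "last (drop i p) = y" using i p by simp
    ultimately show ?thesis by blast
  next
    case False
    have "is_path F (x # p)"
      unfolding is_path_def
    proof (intro conjI allI impI)
      show "distinct (x # p)" using False d by simp
      fix i assume "i + 1 < length (x # p)"
      then show "{(x # p) ! i, (x # p) ! (i + 1)} \<in> F"
        using ed xz p(2) ne by (cases i) (auto simp: hd_conv_nth)
    qed simp
    then show ?thesis using p ne by auto
  qed
qed

lemma acyclic_bridge: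
  assumes "\<not>(\<exists>ps. is_cycle E ps)" "{x,y} \<in> E" "x \<noteq> y"
  shows "(x,y) \<notin> (adj_rel (E - {{x,y}}))\<^sup>*"
proof
  assume "(x,y) \<in> (adj_rel (E - {{x,y}}))\<^sup>*"
  then obtain p where p: "is_path (E - {{x,y}}) p" "hd p = x" "last p = y"
    using path_of_rtrancl[OF \<open>(x,y) \<in> (adj_rel (E - {{x,y}}))\<^sup>*\<close>] by blast
  have ne: "p \<noteq> []" using p by (auto simp: is_path_def)
  have "length p \<noteq> 1"
  proof
    assume "length p = 1" then have "hd p = last p" by (cases p) auto
    then show False using p assms(3) by simp
  qed
  moreover have "length p \<noteq> 2"
  proof
    assume l2: "length p = 2"
    then have "{p!0, p!1} \<in> E - {{x,y}}" using p(1) by (auto simp: is_path_def)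
    moreover have "p!0 = x" "p!1 = y" using p(2,3) ne l2 by (auto simp: hd_conv_nth last_conv_nth)
    ultimately show False by simp
  qed
  ultimately have "length p \<ge> 3" using ne by (simp add: Suc_le_eq) (metis One_nat_def Suc_1 length_0_conv less_2_cases_iff linorder_neqE_nat numeral_3_eq_3 Suc_leI less_Suc_eq)
  moreover have "is_path E p" using p(1) by (rule is_path_mono) auto
  moreover have "{last p, hd p} \<in> E" using p assms(2) by (simp add: insert_commute)
  ultimately have "is_cycle E p" by (simp add: is_cycle_def)
  then show False using assms(1) by blast
qed

lemma closed_rtrancl:
  assumes "(x,y) \<in> (adj_rel H)\<^sup>*" "x \<in> S" "\<forall>u v. {u,v} \<in> H \<longrightarrow> u \<in> S \<longrightarrow> v \<in> S"
  shows "y \<in> S"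
  using assms(1,2) by induction (use assms(3) in auto)

lemma deg_insert: "finite F \<Longrightarrow> e \<notin> F \<Longrightarrow> deg (insert e F) v = deg F v + (if v \<in> e then 1 else 0)"
proof -
  assume "finite F" "e \<notin> F"
  show ?thesis
  proof (cases "v \<in> e")
    case True
    have "{x \<in> insert e F. v \<in> x} = insert e {x \<in> F. v \<in> x}" using True by auto
    then show ?thesis unfolding deg_def using True \<open>finite F\<close> \<open>e \<notin> F\<close> by simp
  next
    case False
    have "{x \<in> insert e F. v \<in> x} = {x \<in> F. v \<in> x}" using False by auto
    then show ?thesis unfolding deg_def using False by simp
  qed
qed

lemma deg_remove: "finite F \<Longrightarrow> a \<in> F \<Longrightarrow> deg (F - {a}) v = deg F v - (if v \<in> a then 1 else 0)"
proof -
  assume f: "finite F" "a \<in> F"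
  show ?thesis
  proof (cases "v \<in> a")
    case True
    have "{e \<in> F - {a}. v \<in> e} = {e \<in> F. v \<in> e} - {a}" by auto
    then show ?thesis unfolding deg_def using True f by (simp add: card_Diff_singleton)
  next
    case False
    have "{e \<in> F - {a}. v \<in> e} = {e \<in> F. v \<in> e}" using False by auto
    then show ?thesis unfolding deg_def using False by simp
  qed
qed

lemma deg_pos: "finite F \<Longrightarrow> a \<in> F \<Longrightarrow> v \<in> a \<Longrightarrow> deg F v \<ge> 1"
proof -
  assume "finite F" "a \<in> F" "v \<in> a"
  then have "{e \<in> F. v \<in> e} \<noteq> {}" "finite {e \<in> F. v \<in> e}" by auto
  then show ?thesis unfolding deg_def by (simp add: Suc_leI card_gt_0_iff)
qed

lemma deg_two_edges:
  assumes "finite F" "a \<in> F" "b \<in> F" "a \<noteq> b" "v \<in> a" "v \<in> b"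
  shows "deg F v \<ge> 2"
proof -
  have "{a,b} \<subseteq> {e \<in> F. v \<in> e}" using assms by auto
  moreover have "finite {e \<in> F. v \<in> e}" using assms(1) by simp
  ultimately have "card {a,b} \<le> deg F v" unfolding deg_def by (rule card_mono[rotated])
  then show ?thesis using assms(4) by simp
qed

lemma deg2_edges:
  assumes "finite F" "deg F v = 2" "a \<in> F" "b \<in> F" "a \<noteq> b" "v \<in> a" "v \<in> b"
  shows "{e \<in> F. v \<in> e} = {a,b}"
proof -
  have "{a,b} \<subseteq> {e \<in> F. v \<in> e}" using assms by auto
  moreover have "finite {e \<in> F. v \<in> e}" using assms(1) by simp
  moreover have "card {a,b} = card {e \<in> F. v \<in> e}" using assms(2,5) by (simp add: deg_def)
  ultimately show ?thesis by (metis card_subset_eq)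
qed

lemma simple_finite: "simple_graph V E \<Longrightarrow> finite E"
proof -
  assume s: "simple_graph V E"
  then have "E \<subseteq> Pow V" by (fastforce simp: simple_graph_def)
  moreover have "finite V" using s by (simp add: simple_graph_def)
  ultimately show ?thesis by (meson finite_Pow_iff finite_subset)
qed

lemma path_snoc:
  assumes "is_path E p" "q \<notin> set p" "{last p, q} \<in> E"
  shows "is_path E (p @ [q])"
  unfolding is_path_def
proof (intro conjI allI impI)
  have ne: "p \<noteq> []" and d: "distinct p" and ed: "\<forall>i. i + 1 < length p \<longrightarrow> {p!i, p!(i+1)} \<in> E"
    using assms by (auto simp: is_path_def)
  show "distinct (p @ [q])" using d assms(2) by simp
  fix i assume i: "i + 1 < length (p @ [q])"
  show "{(p @ [q]) ! i, (p @ [q]) ! (i + 1)} \<in> E"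
  proof (cases "i + 1 < length p")
    case True then show ?thesis using ed by (simp add: nth_append)
  next
    case False
    then have "i + 1 = length p" using i by simp
    then have "i = length p - 1" by simp
    then show ?thesis using assms(3) ne by (simp add: nth_append last_conv_nth)
  qed
qed simp



lemma exists_leaf:
  assumes sg: "simple_graph V E" and ac: "\<not>(\<exists>ps. is_cycle E ps)"
    and q: "is_path E q" "length q \<ge> 3" "set q \<subseteq> V"
  shows "\<exists>l y. l \<in> V \<and> {y,l} \<in> E \<and> y \<noteq> l \<and> {e\<in>E. l\<in>e} = {{y,l}} \<and> deg E y \<ge> 2"
proof -
  have fV: "finite V" using sg by (simp add: simple_graph_def)
  have fE: "finite E" using sg by (rule simple_finite)
  let ?P = "\<lambda>p. is_path E p \<and> set p \<subseteq> V"
  have bnd: "\<forall>p. ?P p \<longrightarrow> length p < card V + 1"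
  proof (intro allI impI)
    fix p assume "?P p"
    then have "card (set p) \<le> card V" "distinct p" using fV by (auto simp: is_path_def card_mono)
    then show "length p < card V + 1" by (simp add: distinct_card)
  qed
  obtain p where pP: "?P p" and pmax: "\<forall>p'. ?P p' \<longrightarrow> length p' \<le> length p"
    using ex_has_greatest_nat[of ?P q length "card V + 1"] q bnd by blast
  let ?m = "length p"
  have m3: "?m \<ge> 3" using pmax q by force
  have d: "distinct p" and ed: "\<forall>i. i + 1 < ?m \<longrightarrow> {p!i, p!(i+1)} \<in> E" and pV: "set p \<subseteq> V"
    using pP by (auto simp: is_path_def)
  have ne: "p \<noteq> []" using m3 by auto
  define l where "l = p!(?m - 1)"
  define y where "y = p!(?m - 2)"
  have lst: "last p = l" using ne by (simp add: l_def last_conv_nth)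
  have yl: "{y,l} \<in> E" using ed[rule_format, of "?m - 2"] m3 by (simp add: y_def l_def numeral_2_eq_2 Suc_diff_Suc)
  have ylne: "y \<noteq> l" using d m3 by (simp add: y_def l_def nth_eq_iff_index_eq)
  have lV: "l \<in> V" unfolding l_def by (rule subsetD[OF pV], rule nth_mem) (use m3 in simp)
  have only: "e = {y,l}" if e: "e \<in> E" "l \<in> e" for e
  proof -
    obtain a b where ab: "a \<in> V" "b \<in> V" "a \<noteq> b" "e = {a,b}" using sg e(1) by (auto simp: simple_graph_def)
    obtain q' where q': "e = {l, q'}" "q' \<noteq> l" "q' \<in> V" using ab e(2) by auto
    show ?thesis
    proof (rule ccontr)
      assume "e \<noteq> {y,l}"
      then have qy: "q' \<noteq> y" using q' by auto
      show False
      proof (cases "q' \<in> set p")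
        case False
        have "{last p, q'} \<in> E" using lst q' e by simp
        then have "is_path E (p @ [q'])" using path_snoc[of E p q'] pP False by simp
        then have "?P (p @ [q'])" using pV q' by auto
        then show False using pmax by fastforce
      next
        case True
        then obtain j where j: "j < ?m" "p!j = q'" by (metis in_set_conv_nth)
        have "j \<noteq> ?m - 1" using j q' l_def by auto
        moreover have "j \<noteq> ?m - 2" using j qy y_def by auto
        ultimately have j3: "j + 3 \<le> ?m" using j by linarith
        have "is_path E (drop j p)"
          unfolding is_path_def using j d ed ne by (auto simp: add.commute add.left_commute)
        moreover have "length (drop j p) \<ge> 3" using j3 by simp
        moreover have "{last (drop j p), hd (drop j p)} \<in> E"
          using j lst q' e by (simp add: hd_drop_conv_nth)
        ultimately have "is_cycle E (drop j p)" by (simp add: is_cycle_def)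
        then show False using ac by blast
      qed
    qed
  qed
  have "{e\<in>E. l\<in>e} = {{y,l}}"
  proof (rule set_eqI)
    fix e show "e \<in> {e\<in>E. l\<in>e} \<longleftrightarrow> e \<in> {{y,l}}"
    proof
      assume "e \<in> {e\<in>E. l\<in>e}" then show "e \<in> {{y,l}}" using only by blast
    next
      assume "e \<in> {{y,l}}" then show "e \<in> {e\<in>E. l\<in>e}" using yl by simp
    qed
  qed
  moreover have "deg E y \<ge> 2"
  proof (rule deg_two_edges[OF fE yl])
    show "{p!(?m - 3), y} \<in> E" using ed[rule_format, of "?m - 3"] m3
      by (simp add: y_def numeral_3_eq_3 numeral_2_eq_2 Suc_diff_Suc)
    show "{y, l} \<noteq> {p!(?m - 3), y}"
      using d m3 by (auto simp: y_def l_def nth_eq_iff_index_eq doubleton_eq_iff)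
  qed auto
  ultimately show ?thesis using lV yl ylne by blast
qed



lemma arith_key: "3 \<le> (a::nat) \<Longrightarrow> 3 \<le> b \<Longrightarrow> 2*a + 2*b \<le> a*b + 3"
proof -
  assume "3 \<le> a" "3 \<le> b"
  then obtain a' b' where "a = a' + 3" "b = b' + 3" by (metis le_add_diff_inverse2)
  then show ?thesis by (simp add: algebra_simps)
qed

lemma sg_vert: "simple_graph V E \<Longrightarrow> e \<in> E \<Longrightarrow> x \<in> e \<Longrightarrow> x \<in> V"
  by (auto simp: simple_graph_def)

theorem lemma10:
  fixes V :: "'a set" and E :: "'a set set" and n b :: nat
  assumes "1 \<le> b" and "real b < real n / 2 - 1"
    and "CT_star n b V E"
    and "\<forall>(V' :: 'a set) E'. CT_star n b V' E' \<longrightarrow> M2 E' \<le> M2 E"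
  shows "\<not> (\<exists>ps. internal_path E ps \<and> length ps - 1 > 1)"
proof
  assume "\<exists>ps. internal_path E ps \<and> length ps - 1 > 1"
  then obtain ps where ip: "internal_path E ps" and k3': "length ps - 1 > 1" by auto
  define k where "k = length ps"
  have k3: "k \<ge> 3" using k3' k_def by simp
  have ct: "chemical_tree V E" and cardV: "card V = n" and br: "card (branching_vertices V E) = b"
    using assms(3) by (auto simp: CT_star_def)
  have sg: "simple_graph V E" and Vne: "V \<noteq> {}" and conn: "connected_graph V E"
    and ac: "\<not>(\<exists>ps. is_cycle E ps)" and deg4: "\<forall>v\<in>V. deg E v \<le> 4"
    using ct by (auto simp: chemical_tree_def tree_def)
  have fE: "finite E" using sg by (rule simple_finite)
  have pp: "is_path E ps" using ip by (simp add: internal_path_def)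
  have d: "distinct ps" and ed: "\<And>i. i + 1 < k \<Longrightarrow> {ps!i, ps!(i+1)} \<in> E"
    using pp by (auto simp: is_path_def k_def)
  have ne: "ps \<noteq> []" using k3 k_def by auto
  have inj: "\<And>i j. i < k \<Longrightarrow> j < k \<Longrightarrow> ps!i = ps!j \<longleftrightarrow> i = j"
    using d k_def by (simp add: nth_eq_iff_index_eq)
  have d0: "deg E (ps!0) > 2" and dr: "deg E (ps!(k-1)) > 2"
    using ip ne by (auto simp: internal_path_def hd_conv_nth last_conv_nth k_def)
  have mid: "\<And>i. 0 < i \<Longrightarrow> i < k - 1 \<Longrightarrow> deg E (ps!i) = 2"
    using ip by (auto simp: internal_path_def k_def)
  have psV: "\<And>i. i < k \<Longrightarrow> ps!i \<in> V"
  proof -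
    fix i assume i: "i < k"
    show "ps!i \<in> V"
    proof (cases "i + 1 < k")
      case True then show ?thesis using sg_vert[OF sg ed[OF True]] by simp
    next
      case False
      then have "(i - 1) + 1 < k" "i = (i - 1) + 1" using i k3 by auto
      then show ?thesis using sg_vert[OF sg ed[of "i - 1"]] by (metis insertI1 insert_commute)
    qed
  qed
  have nbr: "\<And>i. 0 < i \<Longrightarrow> i < k - 1 \<Longrightarrow> {e\<in>E. ps!i \<in> e} = {{ps!(i-1), ps!i}, {ps!i, ps!(i+1)}}"
  proof -
    fix i assume i: "0 < i" "i < k - 1"
    have e1: "{ps!(i-1), ps!i} \<in> E" using ed[of "i - 1"] i by simp
    have e2: "{ps!i, ps!(i+1)} \<in> E" using ed[of i] i by simp
    have "{ps!(i-1), ps!((i-1)+1)} \<noteq> {ps!i, ps!(i+1)}"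
      by (rule path_edges_distinct[OF d]) (use i k_def in auto)
    then have "{ps!(i-1), ps!i} \<noteq> {ps!i, ps!(i+1)}" using i by simp
    then show "?thesis i" using deg2_edges[OF fE mid[OF i] e1 e2] by simp
  qed
  have dge2: "\<And>i. i < k \<Longrightarrow> deg E (ps!i) \<ge> 2"
  proof -
    fix i assume "i < k"
    then have "i = 0 \<or> i = k - 1 \<or> (0 < i \<and> i < k - 1)" by linarith
    then show "deg E (ps!i) \<ge> 2" using d0 dr mid by fastforce
  qed
  obtain l y where lV: "l \<in> V" and yl: "{y,l} \<in> E" and ylne: "y \<noteq> l"
    and lonly: "{e\<in>E. l\<in>e} = {{y,l}}" and dy: "deg E y \<ge> 2"
  proof -
    have "set ps \<subseteq> V" using psV by (auto simp: in_set_conv_nth k_def)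
    moreover have "length ps \<ge> 3" using k3 k_def by simp
    ultimately show ?thesis using exists_leaf[OF sg ac pp] that by blast
  qed
  have degl: "deg E l = 1" using lonly by (simp add: deg_def)
  have lnot: "\<And>i. i < k \<Longrightarrow> l \<noteq> ps!i" using dge2 degl by fastforce
  define u0 where "u0 = ps!0"
  define ur where "ur = ps!(k-1)"
  define w1 where "w1 = ps!1"
  define z where "z = ps!(k-2)"
  define a1 where "a1 = {u0, w1}"
  define a2 where "a2 = {z, ur}"
  define c1 where "c1 = {u0, ur}"
  define c2 where "c2 = {l, w1}"
  define F1 where "F1 = E - {a1}"
  define F0 where "F0 = E - {a1} - {a2}"
  define G1 where "G1 = insert c1 F0"
  define E' where "E' = insert c2 G1"
  define W where "W = {ps!i | i. 0 < i \<and> i < k - 1}"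
  have a1E: "a1 \<in> E" using ed[of 0] k3 by (simp add: a1_def u0_def w1_def)
  have a2E: "a2 \<in> E" using ed[of "k-2"] k3 by (simp add: a2_def z_def ur_def numeral_2_eq_2 Suc_diff_Suc)
  have a12: "a1 \<noteq> a2"
  proof -
    have "{ps!0, ps!(0+1)} \<noteq> {ps!(k-2), ps!((k-2)+1)}"
      by (rule path_edges_distinct[OF d]) (use k3 k_def in auto)
    moreover have "(k-2)+1 = k - 1" using k3 by simp
    ultimately show ?thesis by (simp add: a1_def a2_def u0_def w1_def z_def ur_def)
  qed
  have u0ur: "u0 \<noteq> ur" and u0w1: "u0 \<noteq> w1" and w1ur: "w1 \<noteq> ur" and u0z: "u0 \<noteq> z" and zur: "z \<noteq> ur"
    using inj k3 by (auto simp: u0_def ur_def w1_def z_def)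
  have lu0: "l \<noteq> u0" and lur: "l \<noteq> ur" and lw1: "l \<noteq> w1" and lz: "l \<noteq> z"
    using lnot k3 by (auto simp: u0_def ur_def w1_def z_def)
  have u0V: "u0 \<in> V" and urV: "ur \<in> V" and w1V: "w1 \<in> V"
    using psV k3 by (auto simp: u0_def ur_def w1_def)
  have w1W: "w1 \<in> W" using k3 unfolding W_def w1_def by (auto intro!: exI[of _ 1])
  have zW: "z \<in> W" using k3 unfolding W_def z_def by (auto intro!: exI[of _ "k-2"])
  have u0W: "u0 \<notin> W"
  proof
    assume "u0 \<in> W" then obtain i where "0 < i" "i < k - 1" "ps!0 = ps!i" by (auto simp: W_def u0_def)
    moreover have "i < k" using \<open>i < k - 1\<close> by auto
    ultimately show False using inj[of 0 i] by simp
  qed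
  have urW: "ur \<notin> W"
  proof
    assume "ur \<in> W" then obtain i where "0 < i" "i < k - 1" "ps!(k-1) = ps!i" by (auto simp: W_def ur_def)
    moreover have "i < k" "k - 1 < k" using \<open>i < k - 1\<close> k3 by auto
    ultimately show False using inj[of "k-1" i] by simp
  qed
  have lW: "l \<notin> W"
  proof
    assume "l \<in> W" then obtain i where "0 < i" "i < k - 1" "l = ps!i" by (auto simp: W_def)
    moreover have "i < k" using \<open>i < k - 1\<close> by auto
    ultimately show False using lnot[of i] by simp
  qed
  have fF0: "finite F0" using fE by (simp add: F0_def)
  have F0E: "F0 \<subseteq> E" by (auto simp: F0_def)
  have Wcl: "\<And>u v. {u,v} \<in> G1 \<Longrightarrow> u \<in> W \<Longrightarrow> v \<in> W"
  proof -
    fix u v assume uv: "{u,v} \<in> G1" and uW: "u \<in> W"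
    then obtain i where i: "0 < i" "i < k - 1" "u = ps!i" by (auto simp: W_def)
    have "{u,v} \<noteq> c1" using uW u0W urW by (auto simp: c1_def doubleton_eq_iff)
    then have uvF0: "{u,v} \<in> F0" using uv by (simp add: G1_def)
    then have "{u,v} \<in> {e\<in>E. ps!i \<in> e}" using i F0E by auto
    then have "{u,v} = {ps!(i-1), ps!i} \<or> {u,v} = {ps!i, ps!(i+1)}" using nbr[OF i(1,2)] by simp
    moreover have "ps!(i-1) \<noteq> ps!i" "ps!(i+1) \<noteq> ps!i" using inj i by auto
    ultimately have "v = ps!(i-1) \<or> v = ps!(i+1)" using i(3) by (auto simp: doubleton_eq_iff)
    then show "v \<in> W"
    proof
      assume v: "v = ps!(i-1)"
      have "i - 1 \<noteq> 0"
      proof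
        assume "i - 1 = 0" then have "i = 1" using i by simp
        then have "{u,v} = a1" using v i by (auto simp: a1_def u0_def w1_def)
        then show False using uvF0 by (simp add: F0_def)
      qed
      then show "v \<in> W" using v i unfolding W_def by force
    next
      assume v: "v = ps!(i+1)"
      have "i + 1 \<noteq> k - 1"
      proof
        assume "i + 1 = k - 1" then have "i = k - 2" by simp
        moreover have "Suc (k-2) = k - 1" using k3 by simp
        ultimately have "{u,v} = a2" using v i by (auto simp: a2_def z_def ur_def)
        then show False using uvF0 by (simp add: F0_def)
      qed
      then show "v \<in> W" using v i unfolding W_def by force
    qed
  qed
  have nc1: "(u0, ur) \<notin> (adj_rel F0)\<^sup>*"
  proof
    assume h: "(u0, ur) \<in> (adj_rel F0)\<^sup>*"
    have "F0 \<subseteq> F1" by (auto simp: F0_def F1_def)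
    then have h1: "(u0, ur) \<in> (adj_rel F1)\<^sup>*" using rt_mono[OF _ h] by blast
    have "(ps!1, ps!(k-1)) \<in> (adj_rel F1)\<^sup>*"
    proof (rule walk_seg)
      show "\<forall>m. 1 \<le> m \<and> m < k - 1 \<longrightarrow> {ps ! m, ps ! (m + 1)} \<in> F1"
      proof (intro allI impI)
        fix m assume m: "1 \<le> m \<and> m < k - 1"
        have "{ps!m, ps!(m+1)} \<noteq> {ps!0, ps!(0+1)}"
          by (rule path_edges_distinct[OF d]) (use m k_def in auto)
        moreover have "m + 1 < k" using m by linarith
        ultimately show "{ps ! m, ps ! (m + 1)} \<in> F1" using ed[of m]
          by (simp add: F1_def a1_def u0_def w1_def)
      qed
    qed (use k3 in simp)
    then have "(ur, w1) \<in> (adj_rel F1)\<^sup>*" by (simp add: rt_sym ur_def w1_def)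
    with h1 have "(u0, w1) \<in> (adj_rel F1)\<^sup>*" by (rule rtrancl_trans)
    moreover have "(u0, w1) \<notin> (adj_rel F1)\<^sup>*"
      unfolding F1_def a1_def by (rule acyclic_bridge[OF ac]) (use a1E u0w1 in \<open>auto simp: a1_def\<close>)
    ultimately show False by blast
  qed
  have nc2: "(l, w1) \<notin> (adj_rel G1)\<^sup>*"
  proof
    assume "(l, w1) \<in> (adj_rel G1)\<^sup>*"
    then have "(w1, l) \<in> (adj_rel G1)\<^sup>*" by (rule rt_sym)
    then have "l \<in> W" by (rule closed_rtrancl) (use w1W Wcl in simp, use Wcl in blast)
    then show False using lW by blast
  qed
  have c1F0: "c1 \<notin> F0" using nc1 rt_edge[of u0 ur F0] unfolding c1_def by blast
  have c2G1: "c2 \<notin> G1" using nc2 rt_edge[of l w1 G1] unfolding c2_def by blast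
  have c1E: "c1 \<notin> E"
  proof
    assume "c1 \<in> E"
    moreover have "c1 \<noteq> a1" using u0ur u0w1 w1ur by (auto simp: c1_def a1_def doubleton_eq_iff)
    moreover have "c1 \<noteq> a2" using u0ur u0z by (auto simp: c1_def a2_def doubleton_eq_iff)
    ultimately show False using c1F0 by (simp add: F0_def)
  qed
  have c2E: "c2 \<notin> E"
  proof
    assume "c2 \<in> E"
    moreover have "c2 \<noteq> a1" using lu0 lw1 by (auto simp: c2_def a1_def doubleton_eq_iff)
    moreover have "c2 \<noteq> a2" using lz lur by (auto simp: c2_def a2_def doubleton_eq_iff)
    ultimately show False using c2G1 by (simp add: F0_def G1_def)
  qed
  have c12: "c1 \<noteq> c2" using lu0 lur by (auto simp: c1_def c2_def doubleton_eq_iff)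
  have acF0: "\<not>(\<exists>ps. is_cycle F0 ps)"
    using ac F0E by (auto simp: is_cycle_def intro: is_path_mono)
  have acG1: "\<not>(\<exists>ps. is_cycle G1 ps)"
    unfolding G1_def c1_def by (rule acyclic_insert[OF acF0 nc1])
  have acE': "\<not>(\<exists>ps. is_cycle E' ps)"
    unfolding E'_def c2_def by (rule acyclic_insert[OF acG1 nc2])
  have sgE': "simple_graph V E'"
    using sg F0E u0V urV lV w1V u0ur lw1
    unfolding simple_graph_def E'_def G1_def c1_def c2_def by blast
  define X where "X = {v. (u0,v) \<in> (adj_rel F0)\<^sup>* \<or> (ur,v) \<in> (adj_rel F0)\<^sup>*} \<union> W"
  have Xcl: "\<And>u v. {u,v} \<in> E \<Longrightarrow> u \<in> X \<Longrightarrow> v \<in> X"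
  proof -
    fix u v assume uv: "{u,v} \<in> E" and uX: "u \<in> X"
    show "v \<in> X"
    proof (cases "{u,v} \<in> F0")
      case True
      show ?thesis
      proof (cases "u \<in> W")
        case True
        then have "v \<in> W" using Wcl \<open>{u,v} \<in> F0\<close> by (auto simp: G1_def)
        then show ?thesis by (simp add: X_def)
      next
        case False
        then have "(u0,u) \<in> (adj_rel F0)\<^sup>* \<or> (ur,u) \<in> (adj_rel F0)\<^sup>*" using uX by (simp add: X_def)
        moreover have "(u,v) \<in> adj_rel F0" using True by simp
        ultimately have "(u0,v) \<in> (adj_rel F0)\<^sup>* \<or> (ur,v) \<in> (adj_rel F0)\<^sup>*"
          using rtrancl_into_rtrancl[of u0 u "adj_rel F0" v] rtrancl_into_rtrancl[of ur u "adj_rel F0" v] by blast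
        then show ?thesis unfolding X_def by blast
      qed
    next
      case False
      then have "{u,v} = a1 \<or> {u,v} = a2" using uv by (auto simp: F0_def)
      then have "v \<in> {u0, w1, z, ur}" by (auto simp: a1_def a2_def doubleton_eq_iff)
      then show ?thesis using w1W zW by (auto simp: X_def)
    qed
  qed
  have allX: "\<And>v. v \<in> V \<Longrightarrow> v \<in> X"
  proof -
    fix v assume "v \<in> V"
    then have "(u0, v) \<in> (adj_rel E)\<^sup>*" using conn u0V by (simp add: connected_graph_def)
    then show "v \<in> X" by (rule closed_rtrancl) (use Xcl in \<open>auto simp: X_def\<close>)
  qed
  have F0E': "F0 \<subseteq> E'" by (auto simp: E'_def G1_def)
  have c1E': "c1 \<in> E'" and c2E': "c2 \<in> E'" by (auto simp: E'_def G1_def)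
  have ntW: "(u0, v) \<in> (adj_rel E')\<^sup>*" if "v \<in> X" "v \<notin> W" for v
  proof -
    have "(u0,v) \<in> (adj_rel F0)\<^sup>* \<or> (ur,v) \<in> (adj_rel F0)\<^sup>*" using that by (simp add: X_def)
    then have "(u0,v) \<in> (adj_rel E')\<^sup>* \<or> (ur,v) \<in> (adj_rel E')\<^sup>*" using rt_mono[OF F0E', of u0 v] rt_mono[OF F0E', of ur v] by argo
    moreover have uu: "(u0,ur) \<in> (adj_rel E')\<^sup>*" using c1E' rt_edge[of u0 ur E'] by (simp add: c1_def)
    ultimately show ?thesis using rtrancl_trans[OF uu, of v] by blast
  qed
  have u0l: "(u0, l) \<in> (adj_rel E')\<^sup>*" using ntW[OF allX[OF lV] lW] .
  have u0w1c: "(u0, w1) \<in> (adj_rel E')\<^sup>*"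
  proof -
    have "(l, w1) \<in> (adj_rel E')\<^sup>*" using c2E' rt_edge[of l w1 E'] by (simp add: c2_def)
    then show ?thesis using rtrancl_trans[OF u0l] by blast
  qed
  have u0all: "(u0, v) \<in> (adj_rel E')\<^sup>*" if "v \<in> V" for v
  proof (cases "v \<in> W")
    case False then show ?thesis using ntW[OF allX[OF that]] by blast
  next
    case True
    then obtain i where i: "0 < i" "i < k - 1" "v = ps!i" by (auto simp: W_def)
    have "(ps!1, ps!i) \<in> (adj_rel F0)\<^sup>*"
    proof (rule walk_seg)
      show "\<forall>m. 1 \<le> m \<and> m < i \<longrightarrow> {ps ! m, ps ! (m + 1)} \<in> F0"
      proof (intro allI impI)
        fix m assume m: "1 \<le> m \<and> m < i"
        have "{ps!m, ps!(m+1)} \<noteq> {ps!0, ps!(0+1)}"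
          by (rule path_edges_distinct[OF d]) (use m i k_def in auto)
        moreover have "{ps!m, ps!(m+1)} \<noteq> {ps!(k-2), ps!((k-2)+1)}"
          by (rule path_edges_distinct[OF d]) (use m i k_def in auto)
        moreover have "(k-2)+1 = k-1" using k3 by simp
        moreover have "m + 1 < k" using m i by linarith
        ultimately show "{ps ! m, ps ! (m + 1)} \<in> F0" using ed[of m]
          by (simp add: F0_def a1_def a2_def u0_def w1_def z_def ur_def)
      qed
    qed (use i in simp)
    then have "(w1, v) \<in> (adj_rel E')\<^sup>*" using rt_mono[OF F0E'] i by (simp add: w1_def)
    then show ?thesis using rtrancl_trans[OF u0w1c] by blast
  qed
  have connE': "connected_graph V E'"
    unfolding connected_graph_def
  proof (intro ballI)
    fix u v assume "u \<in> V" "v \<in> V"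
    then have "(u, u0) \<in> (adj_rel E')\<^sup>*" "(u0, v) \<in> (adj_rel E')\<^sup>*" using u0all[of u] u0all[of v] rt_sym[of u0 u E'] by auto
    then show "(u, v) \<in> (adj_rel E')\<^sup>*" by (rule rtrancl_trans)
  qed
  have fF1: "finite F1" using fE by (simp add: F1_def)
  have fG1: "finite G1" using fF0 by (simp add: G1_def)
  have a2F1: "a2 \<in> F1" using a2E a12 by (simp add: F1_def)
  have F0F1: "F0 = F1 - {a2}" by (simp add: F0_def F1_def)
  have degE': "deg E' v = deg E v - (if v \<in> a1 then 1 else 0) - (if v \<in> a2 then 1 else 0)
       + (if v \<in> c1 then 1 else 0) + (if v \<in> c2 then 1 else 0)" for v
  proof -
    have "deg F1 v = deg E v - (if v \<in> a1 then 1 else 0)"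
      unfolding F1_def by (rule deg_remove[OF fE a1E])
    moreover have "deg F0 v = deg F1 v - (if v \<in> a2 then 1 else 0)"
      unfolding F0F1 by (rule deg_remove[OF fF1 a2F1])
    moreover have "deg G1 v = deg F0 v + (if v \<in> c1 then 1 else 0)"
      unfolding G1_def by (rule deg_insert[OF fF0 c1F0])
    moreover have "deg E' v = deg G1 v + (if v \<in> c2 then 1 else 0)"
      unfolding E'_def by (rule deg_insert[OF fG1 c2G1])
    ultimately show ?thesis by simp
  qed
  have degu0: "deg E u0 \<ge> 3" and degur: "deg E ur \<ge> 3" using d0 dr by (auto simp: u0_def ur_def)
  have degw1: "deg E w1 = 2" using mid[of 1] k3 by (simp add: w1_def)
  have degz: "deg E z = 2" using mid[of "k-2"] k3 by (simp add: z_def)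
  have D1: "deg E' v = deg E v" if "v \<noteq> l" "v \<noteq> z" for v
  proof -
    consider "v = u0" | "v = ur" | "v = w1" | "v \<noteq> u0" "v \<noteq> ur" "v \<noteq> w1" by blast
    then show ?thesis
    proof cases
      case 1
      have "u0 \<in> a1" "u0 \<notin> a2" "u0 \<in> c1" "u0 \<notin> c2"
        using u0z u0ur lu0 u0w1 by (auto simp: a1_def a2_def c1_def c2_def)
      then show ?thesis using 1 degu0 degE'[of v] by simp
    next
      case 2
      have "ur \<notin> a1" "ur \<in> a2" "ur \<in> c1" "ur \<notin> c2"
        using u0ur w1ur lur by (auto simp: a1_def a2_def c1_def c2_def)
      then show ?thesis using 2 degur degE'[of v] by simp
    next
      case 3
      have "w1 \<in> a1" "w1 \<notin> a2" "w1 \<notin> c1" "w1 \<in> c2"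
        using that 3 w1ur u0w1 by (auto simp: a1_def a2_def c1_def c2_def)
      then show ?thesis using 3 degw1 degE'[of v] by simp
    next
      case 4
      have "v \<notin> a1" "v \<notin> a2" "v \<notin> c1" "v \<notin> c2"
        using that 4 by (auto simp: a1_def a2_def c1_def c2_def)
      then show ?thesis using degE'[of v] by simp
    qed
  qed
  have D2: "deg E' l = 2"
  proof -
    have "l \<notin> a1" "l \<notin> a2" "l \<notin> c1" "l \<in> c2"
      using lu0 lw1 lz lur by (auto simp: a1_def a2_def c1_def c2_def)
    then show ?thesis using degl degE'[of l] by simp
  qed
  have D3: "deg E' z = 1"
  proof (cases "z = w1")
    case True
    have "z \<in> a1" "z \<in> a2" "z \<notin> c1" "z \<in> c2"
      using True u0z zur by (auto simp: a1_def a2_def c1_def c2_def)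
    then show ?thesis using degz degE'[of z] by simp
  next
    case False
    have "z \<notin> a1" "z \<in> a2" "z \<notin> c1" "z \<notin> c2"
      using False u0z zur lz by (auto simp: a1_def a2_def c1_def c2_def)
    then show ?thesis using degz degE'[of z] by simp
  qed
  have lVz: "z \<in> V" using psV k3 by (simp add: z_def)
  have deg4': "\<forall>v\<in>V. deg E' v \<le> 4"
  proof
    fix v assume "v \<in> V"
    then show "deg E' v \<le> 4" using D1[of v] D2 D3 deg4 by (cases "v = l \<or> v = z") auto
  qed
  have brEq: "branching_vertices V E' = branching_vertices V E"
  proof -
    have "deg E' v > 2 \<longleftrightarrow> deg E v > 2" for v
      using D1[of v] D2 D3 degl degz by (cases "v = l \<or> v = z") auto
    then show ?thesis by (simp add: branching_vertices_def)
  qed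
  have CT': "CT_star n b V E'"
    unfolding CT_star_def chemical_tree_def tree_def
    using sgE' Vne connE' acE' deg4' cardV brEq br by simp
  have le: "M2 E' \<le> M2 E" using assms(4) CT' by blast
  define f where "f = (\<lambda>e. \<Prod>v\<in>e. deg E v)"
  define g where "g = (\<lambda>e. \<Prod>v\<in>e. deg E' v)"
  define ep where "ep = {y, l}"
  have M2E: "M2 E = f a1 + f a2 + sum f F0"
  proof -
    have "sum f E = f a1 + sum f F1" unfolding F1_def by (rule sum.remove[OF fE a1E])
    moreover have "sum f F1 = f a2 + sum f F0" unfolding F0F1 by (rule sum.remove[OF fF1 a2F1])
    ultimately show ?thesis by (simp add: M2_def f_def)
  qed
  have M2E': "M2 E' = g c2 + g c1 + sum g F0"
    using fF0 fG1 c1F0 c2G1 by (simp add: M2_def g_def E'_def G1_def)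
  have lnotin: "l \<notin> a1" "l \<notin> a2" using lu0 lw1 lz lur by (auto simp: a1_def a2_def)
  have epF0: "ep \<in> F0" using yl lnotin by (auto simp: ep_def F0_def)
  have gf: "g e = f e" if "e \<in> F0" "l \<notin> e" "z \<notin> e" for e
    unfolding g_def f_def
  proof (rule prod.cong[OF refl])
    fix x assume "x \<in> e"
    then have "x \<noteq> l" "x \<noteq> z" using that by auto
    then show "deg E' x = deg E x" by (rule D1)
  qed
  have lonly': "e = ep" if "e \<in> E" "l \<in> e" for e
    using lonly that by (auto simp: ep_def)
  have zE: "{e\<in>E. z\<in>e} = {{ps!(k-3), z}, {z, ur}}"
  proof -
    have "k - 2 - 1 = k - 3" "k - 2 + 1 = k - 1" using k3 by auto
    then show ?thesis using nbr[of "k-2"] k3 by (simp add: z_def ur_def)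
  qed
  have yz: "y \<noteq> z"
  proof
    assume "y = z"
    then have "{y,l} \<in> {e\<in>E. z\<in>e}" using yl by simp
    then have "{y,l} = {ps!(k-3), z} \<or> {y,l} = {z, ur}" using zE by simp
    then have "l = ps!(k-3) \<or> l = ur" using ylne \<open>y = z\<close> by (auto simp: doubleton_eq_iff)
    then show False using lnot[of "k-3"] lur k3 by auto
  qed
  have fep: "f ep = deg E y" using ylne degl by (simp add: f_def ep_def)
  have gep: "g ep = deg E y * 2" using ylne D1[of y] D2 yz by (simp add: g_def ep_def)
  have fa1: "f a1 = deg E u0 * 2" using u0w1 degw1 by (simp add: f_def a1_def)
  have fa2: "f a2 = 2 * deg E ur" using zur degz by (simp add: f_def a2_def)
  have gc1: "g c1 = deg E u0 * deg E ur"
    using u0ur D1[of u0] D1[of ur] lu0 lur u0z zur by (simp add: g_def c1_def)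
  have key: "2 * deg E u0 + 2 * deg E ur \<le> deg E u0 * deg E ur + 3"
    by (rule arith_key[OF degu0 degur])
  show False
  proof (cases "k = 3")
    case True
    have zw1: "z = w1" using True by (simp add: z_def w1_def)
    have u03: "ps!(k-3) = u0" using True by (simp add: u0_def)
    have gc2: "g c2 = 2" using lw1 D2 D3 zw1 by (simp add: g_def c2_def)
    have rest: "g e = f e" if "e \<in> F0 - {ep}" for e
    proof (rule gf)
      show "e \<in> F0" using that by simp
      show "l \<notin> e" using that lonly' F0E by blast
      show "z \<notin> e"
      proof
        assume "z \<in> e"
        then have "e \<in> {e\<in>E. z\<in>e}" using that F0E by blast
        then have "e = a1 \<or> e = a2" using zE u03 zw1 by (auto simp: a1_def a2_def insert_commute)
        then show False using that by (auto simp: F0_def)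
      qed
    qed
    have "sum g F0 = g ep + sum g (F0 - {ep})" by (rule sum.remove[OF fF0 epF0])
    moreover have "sum f F0 = f ep + sum f (F0 - {ep})" by (rule sum.remove[OF fF0 epF0])
    moreover have "sum g (F0 - {ep}) = sum f (F0 - {ep})" using rest by (rule sum.cong[OF refl])
    ultimately have "M2 E' + 2 * deg E u0 + 2 * deg E ur + deg E y = M2 E + 2 + deg E u0 * deg E ur + 2 * deg E y"
      using M2E M2E' gc2 gc1 gep fep fa1 fa2 by simp
    then show False using le key dy by linarith
  next
    case False
    then have k4: "k \<ge> 4" using k3 by simp
    define ez where "ez = {ps!(k-3), z}"
    have x3: "deg E (ps!(k-3)) = 2" using mid[of "k-3"] k4 by simp
    have x3ne: "ps!(k-3) \<noteq> z" "ps!(k-3) \<noteq> l" "ps!(k-3) \<noteq> ur" "ps!(k-3) \<noteq> u0"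
      using inj[of "k-3" "k-2"] inj[of "k-3" "k-1"] inj[of "k-3" 0] lnot[of "k-3"] k4
      by (auto simp: z_def ur_def u0_def)
    have zw1: "z \<noteq> w1" using inj[of "k-2" 1] k4 by (simp add: z_def w1_def)
    have ezE: "ez \<in> E" using zE by (auto simp: ez_def)
    have ezF0: "ez \<in> F0" using ezE x3ne zw1 u0z zur by (auto simp: ez_def F0_def a1_def a2_def doubleton_eq_iff)
    have ezep: "ez \<noteq> ep" using x3ne lz by (auto simp: ez_def ep_def doubleton_eq_iff)
    have fez: "f ez = 4" using x3 x3ne degz by (simp add: f_def ez_def)
    have gez: "g ez = 2" using x3 x3ne D1[of "ps!(k-3)"] D3 by (simp add: g_def ez_def)
    have gc2: "g c2 = 4" using lw1 D2 D1[of w1] zw1 degw1 by (simp add: g_def c2_def)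
    have rest: "g e = f e" if "e \<in> F0 - {ep} - {ez}" for e
    proof (rule gf)
      show "e \<in> F0" using that by simp
      show "l \<notin> e" using that lonly' F0E by blast
      show "z \<notin> e"
      proof
        assume "z \<in> e"
        then have "e \<in> {e\<in>E. z\<in>e}" using that F0E by blast
        then have "e = ez \<or> e = a2" using zE by (auto simp: ez_def a2_def)
        then show False using that by (auto simp: F0_def)
      qed
    qed
    have ezF0': "ez \<in> F0 - {ep}" using ezF0 ezep by simp
    have "sum g F0 = g ep + sum g (F0 - {ep})" by (rule sum.remove[OF fF0 epF0])
    moreover have "sum f F0 = f ep + sum f (F0 - {ep})" by (rule sum.remove[OF fF0 epF0])
    moreover have "sum g (F0 - {ep}) = g ez + sum g (F0 - {ep} - {ez})" by (rule sum.remove) (use fF0 ezF0' in auto)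
    moreover have "sum f (F0 - {ep}) = f ez + sum f (F0 - {ep} - {ez})" by (rule sum.remove) (use fF0 ezF0' in auto)
    moreover have "sum g (F0 - {ep} - {ez}) = sum f (F0 - {ep} - {ez})" using rest by (rule sum.cong[OF refl])
    ultimately have "M2 E' + 2 * deg E u0 + 2 * deg E ur + deg E y + 4 = M2 E + 4 + deg E u0 * deg E ur + 2 * deg E y + 2"
      using M2E M2E' gc2 gc1 gep fep fa1 fa2 fez gez by simp
    then show False using le key dy by linarith
  qed
qed

end
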